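(* Let $\mathbb{F}$ be a field of characteristic zero. Fix $K\in\mathbb{N}$ and $\mu\vdash 4K$. There exists an integer $M_K\geq 3K$ such that for every $n\geq M_K$ the following holds: if $T$ is a standard tableau of shape $\mu^{(n-3K)}$, $O\in\Omega_{n,n+K}$, and $P:=\mathrm{Sub}^T_{(x,y)}(P_O)$, then for every monomial $u$ occurring in $P$ there exists a polynomial $p(x)\in\mathbb{F}[x]$ such that $\mathrm{Coef}_{u^{(s)}}(P^{(s)})=p(s)\cdot s!$ for every $s\in\mathbb{Z}_{\geq 0}$.
   Context: $\mathbb{F}\langle Y\rangle$ is the free non-unitary associative algebra on $Y=\{y_1,y_2,\dots\}$; $\mathrm{Coef}_u(P)$ is the coefficient of the monomial $u$ in $P$. A standard tableau $T$ of shape $\nu\vdash m$ is the Young diagram of $\nu$ filled with $1,\dots,m$ increasing along rows and columns; $\mathrm{Sub}^T_{(x,y)}$ is the homomorphism $x_j\mapsto y_{i_j}$, $i_j$ the row of $T$ containing $j$. For $\nu=(\nu_1,\dots,\nu_r)$, $\nu^{(s)}=(\nu_1+s,\nu_2,\dots,\nu_r)$. $\Omega_{n,m}$ is the set of ordered partitions $O=\{A_1,\dots,A_n\}$ of $[m]$ into $n$ nonempty ordered lists (underlying sets disjoint with union $[m]$); $x_A=x_ax_b\cdots x_c$ for $A=[\![ab\cdots c]\!]$; $P_n(z_1,\dots,z_n)=\sum_{\sigma\in S_n}z_{\sigma(1)}\cdots z_{\sigma(n)}$, $P_O=P_n(x_{A_1},\dots,x_{A_n})$, so $P=P_n(m_1,\dots,m_n)$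 with $m_k=\mathrm{Sub}^T_{(x,y)}(x_{A_k})$, and $P^{(s)}:=P_{n+s}(m_1,\dots,m_n,y_1,\dots,y_1)$ ($s$ copies of $y_1$). For a monomial $u$, a submonomial is $v$ with $u=gvh$ for monomials $g,h$ (possibly empty); the central part $\mathrm{C}(u)$ is the longest submonomial of the form $y_1^r$ (leftmost one if several); writing $u=g\,\mathrm{C}(u)\,h$, $u^{(s)}:=g\,y_1^{s}\mathrm{C}(u)\,h$. *)

theory Defs
  imports "HOL-Combinatorics.Permutations" "HOL-Computational_Algebra.Polynomial"
begin

text \<open>Monomials of the free non-unitary algebra on Y = {y_1, y_2, ...} are words,
  represented as lists of variable indices (y_i is the number i, so y_1 is 1).
  A noncommutative polynomial is represented by its coefficient function on words.\<close>

definition is_partition :: "nat list \<Rightarrow> bool" where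
  "is_partition \<nu> \<longleftrightarrow> sorted_wrt (\<ge>) \<nu> \<and> 0 \<notin> set \<nu>"

definition shift_first :: "nat \<Rightarrow> nat list \<Rightarrow> nat list" where
  "shift_first s \<nu> = (case \<nu> of [] \<Rightarrow> (if s = 0 then [] else [s]) | a # r \<Rightarrow> (a + s) # r)"

text \<open>Young diagram, cells (row, column), 1-based.\<close>
definition diagram :: "nat list \<Rightarrow> (nat \<times> nat) set" where
  "diagram \<nu> = {(i, c). 1 \<le> i \<and> i \<le> length \<nu> \<and> 1 \<le> c \<and> c \<le> \<nu> ! (i - 1)}"

definition standard_tableau :: "nat list \<Rightarrow> (nat \<times> nat \<Rightarrow> nat) \<Rightarrow> bool" where
  "standard_tableau \<nu> T \<longleftrightarrow>
     bij_betw T (diagram \<nu>) {1..sum_list \<nu>} \<and>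
     (\<forall>i c. (i, c) \<in> diagram \<nu> \<and> (i, c + 1) \<in> diagram \<nu> \<longrightarrow> T (i, c) < T (i, c + 1)) \<and>
     (\<forall>i c. (i, c) \<in> diagram \<nu> \<and> (i + 1, c) \<in> diagram \<nu> \<longrightarrow> T (i, c) < T (i + 1, c))"

definition row_of :: "nat list \<Rightarrow> (nat \<times> nat \<Rightarrow> nat) \<Rightarrow> nat \<Rightarrow> nat" where
  "row_of \<nu> T j = fst (the_inv_into (diagram \<nu>) T j)"

definition Omega :: "nat \<Rightarrow> nat \<Rightarrow> nat list list set" where
  "Omega n m = {Os. length Os = n \<and> (\<forall>A \<in> set Os. A \<noteq> []) \<and> distinct (concat Os) \<and>
                   set (concat Os) = {1..m}}"

text \<open>m_k = Sub^T (x_{A_k}) for the blocks A_k of Os.\<close>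
definition sub_blocks :: "nat list \<Rightarrow> (nat \<times> nat \<Rightarrow> nat) \<Rightarrow> nat list list \<Rightarrow> nat list list" where
  "sub_blocks \<nu> T Os = map (map (row_of \<nu> T)) Os"

text \<open>P_n(z_1,...,z_n) = sum over sigma in S_n of z_{sigma(1)}...z_{sigma(n)} for monomials z_k,
  given by its coefficient function: Coef_u(P_n(zs)).\<close>
definition Pn_coef :: "nat list list \<Rightarrow> nat list \<Rightarrow> 'a::field_char_0" where
  "Pn_coef zs u = of_nat (card {\<sigma>. \<sigma> permutes {..<length zs} \<and>
                                  concat (map (\<lambda>i. zs ! \<sigma> i) [0..<length zs]) = u})"

text \<open>Central part: longest run y_1^r (leftmost if several), u = g C(u) h.\<close>
definition run_at :: "nat list \<Rightarrow> nat \<Rightarrow> nat \<Rightarrow> bool" where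
  "run_at u i r \<longleftrightarrow> i + r \<le> length u \<and> (\<forall>j < r. u ! (i + j) = 1)"

definition central_len :: "nat list \<Rightarrow> nat" where
  "central_len u = Max {r. \<exists>i. run_at u i r}"

definition central_start :: "nat list \<Rightarrow> nat" where
  "central_start u = (LEAST i. run_at u i (central_len u))"

definition ushift :: "nat \<Rightarrow> nat list \<Rightarrow> nat list" where
  "ushift s u = take (central_start u) u @ replicate s 1 @ drop (central_start u) u"

end

theory Submission
  imports Defs "HOL-Combinatorics.Multiset_Permutations"
begin


lemma powsum_poly: "\<exists>R::'a::field_char_0 poly. \<forall>n. poly R (of_nat n) = (\<Sum>k<n. (of_nat k) ^ d)"
proof (induction d rule: less_induct)
  case (less d)
  have "\<forall>j. \<exists>R::'a poly. j < d \<longrightarrow> (\<forall>n. poly R (of_nat n) = (\<Sum>k<n. (of_nat k) ^ j))"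
    using less by blast
  then obtain Rj where Rj: "\<And>j n. j < d \<Longrightarrow> poly (Rj j) (of_nat n) = (\<Sum>k<n. (of_nat k :: 'a) ^ j)"
    by metis
  define R where "R = smult (1/of_nat (Suc d)) (monom 1 (Suc d) - (\<Sum>j<d. smult (of_nat (Suc d choose j)) (Rj j)))"
  have key: "(of_nat n :: 'a) ^ Suc d = of_nat (Suc d) * (\<Sum>k<n. (of_nat k) ^ d) + (\<Sum>j<d. of_nat (Suc d choose j) * (\<Sum>k<n. (of_nat k :: 'a) ^ j))" for n
  proof -
    have "(of_nat n :: 'a) ^ Suc d = (\<Sum>k<n. (of_nat (Suc k)) ^ Suc d - (of_nat k) ^ Suc d)"
      using sum_lessThan_telescope[of "\<lambda>k. (of_nat k :: 'a) ^ Suc d" n] by simp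
    also have "\<dots> = (\<Sum>k<n. \<Sum>j<Suc d. of_nat (Suc d choose j) * (of_nat k :: 'a) ^ j)"
    proof (rule sum.cong[OF refl])
      fix k
      have "(of_nat (Suc k) :: 'a) ^ Suc d = (of_nat k + 1) ^ Suc d" by (simp add: add.commute)
      also have "\<dots> = (\<Sum>j\<le>Suc d. of_nat (Suc d choose j) * (of_nat k) ^ j * 1 ^ (Suc d - j))"
        by (rule binomial_ring)
      also have "\<dots> = (\<Sum>j<Suc d. of_nat (Suc d choose j) * (of_nat k :: 'a) ^ j) + (of_nat k) ^ Suc d"
        by (simp add: lessThan_Suc_atMost[symmetric])
      finally show "(of_nat (Suc k)) ^ Suc d - (of_nat k) ^ Suc d = (\<Sum>j<Suc d. of_nat (Suc d choose j) * (of_nat k :: 'a) ^ j)"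
        by simp
    qed
    also have "\<dots> = (\<Sum>j<Suc d. of_nat (Suc d choose j) * (\<Sum>k<n. (of_nat k :: 'a) ^ j))"
      by (subst sum.swap) (simp add: sum_distrib_left)
    also have "\<dots> = of_nat (Suc d) * (\<Sum>k<n. (of_nat k) ^ d) + (\<Sum>j<d. of_nat (Suc d choose j) * (\<Sum>k<n. (of_nat k :: 'a) ^ j))"
      by (simp add: add.commute)
    finally show ?thesis .
  qed
  have "poly R (of_nat n) = (\<Sum>k<n. (of_nat k) ^ d)" for n
  proof -
    have "poly R (of_nat n) = (1/of_nat (Suc d)) * ((of_nat n) ^ Suc d - (\<Sum>j<d. of_nat (Suc d choose j) * (\<Sum>k<n. (of_nat k :: 'a) ^ j)))"
      by (simp add: R_def poly_sum poly_monom Rj)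
    also have "\<dots> = (\<Sum>k<n. (of_nat k) ^ d)"
      unfolding key by (simp del: of_nat_Suc)
    finally show ?thesis .
  qed
  then show ?case by blast
qed

lemma sum_poly: "\<exists>R::'a::field_char_0 poly. \<forall>n. poly R (of_nat n) = (\<Sum>k<n. poly Q (of_nat k))"
proof -
  have "\<forall>j. \<exists>R::'a poly. (\<forall>n. poly R (of_nat n) = (\<Sum>k<n. (of_nat k) ^ j))"
    using powsum_poly by blast
  then obtain Rj where Rj: "\<And>j n. poly (Rj j) (of_nat n) = (\<Sum>k<n. (of_nat k :: 'a) ^ j)"
    by metis
  define R where "R = (\<Sum>j\<le>degree Q. smult (coeff Q j) (Rj j))"
  have "poly R (of_nat n) = (\<Sum>k<n. poly Q (of_nat k))" for n
  proof -
    have "poly R (of_nat n) = (\<Sum>j\<le>degree Q. coeff Q j * (\<Sum>k<n. (of_nat k :: 'a) ^ j))"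
      by (simp add: R_def poly_sum Rj)
    also have "\<dots> = (\<Sum>k<n. \<Sum>j\<le>degree Q. coeff Q j * (of_nat k :: 'a) ^ j)"
      by (simp add: sum_distrib_left sum.swap[of _ "{..<n}"])
    also have "\<dots> = (\<Sum>k<n. poly Q (of_nat k))"
      by (simp add: poly_altdef)
    finally show ?thesis .
  qed
  then show ?thesis by blast
qed

lemma antideriv_poly:
  fixes Q :: "'a::field_char_0 poly"
  shows "\<exists>P. poly P 0 = c0 \<and> (\<forall>s. poly P (of_nat (Suc s)) = poly P (of_nat s) + poly Q (of_nat (Suc s)))"
proof -
  obtain R :: "'a poly" where R: "\<And>n. poly R (of_nat n) = (\<Sum>k<n. poly (pcompose Q [:1,1:]) (of_nat k))"
    using sum_poly by blast
  define P where "P = R + [:c0:]"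
  have "poly P 0 = c0" using R[of 0] by (simp add: P_def)
  moreover have "poly P (of_nat (Suc s)) = poly P (of_nat s) + poly Q (of_nat (Suc s))" for s
    using R[of s] R[of "Suc s"] by (simp add: P_def poly_pcompose algebra_simps)
  ultimately show ?thesis by blast
qed



definition arrc :: "(nat \<Rightarrow> nat list) \<Rightarrow> nat set \<Rightarrow> nat list \<Rightarrow> nat" where
  "arrc Z S w = card {xs \<in> permutations_of_set S. concat (map Z xs) = w}"

lemma arrc_empty: "arrc Z {} w = (if w = [] then 1 else 0)"
proof -
  have "{xs \<in> permutations_of_set {}. concat (map Z xs) = w} = (if w = [] then {[]} else {})" by auto
  then show ?thesis by (simp add: arrc_def)
qed

lemma arrc_rec:
  assumes "finite S" "S \<noteq> {}"
  shows "arrc Z S w = (\<Sum>i\<in>S. if take (length (Z i)) w = Z i then arrc Z (S - {i}) (drop (length (Z i)) w) else 0)"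
proof -
  define A where "A i = {ys \<in> permutations_of_set (S - {i}). Z i @ concat (map Z ys) = w}" for i
  have "{xs \<in> permutations_of_set S. concat (map Z xs) = w} = (\<Union>i\<in>S. (\<lambda>xs. i # xs) ` A i)"
    using assms(2) by (subst permutations_of_set_nonempty) (auto simp: A_def)
  hence "arrc Z S w = card (\<Union>i\<in>S. (\<lambda>xs. i # xs) ` A i)" by (simp add: arrc_def)
  also have "\<dots> = (\<Sum>i\<in>S. card ((\<lambda>xs. i # xs) ` A i))"
    by (rule card_UN_disjoint) (auto simp: assms A_def)
  also have "\<dots> = (\<Sum>i\<in>S. card (A i))"
    by (rule sum.cong[OF refl]) (simp add: card_image)
  also have "\<dots> = (\<Sum>i\<in>S. if take (length (Z i)) w = Z i then arrc Z (S - {i}) (drop (length (Z i)) w) else 0)"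
  proof (rule sum.cong[OF refl])
    fix i
    have "A i = (if take (length (Z i)) w = Z i then {ys \<in> permutations_of_set (S - {i}). concat (map Z ys) = drop (length (Z i)) w} else {})"
      unfolding A_def by (auto simp: append_eq_conv_conj)
    thus "card (A i) = (if take (length (Z i)) w = Z i then arrc Z (S - {i}) (drop (length (Z i)) w) else 0)"
      by (simp add: arrc_def)
  qed
  finally show ?thesis .
qed

lemma arrc_len:
  assumes "arrc Z S w \<noteq> 0"
  shows "length w = (\<Sum>i\<in>S. length (Z i))"
proof -
  from assms obtain xs where xs: "xs \<in> permutations_of_set S" "concat (map Z xs) = w"
    unfolding arrc_def by (metis (mono_tags, lifting) card.empty empty_Collect_eq)
  have "length w = sum_list (map (\<lambda>i. length (Z i)) xs)"
    using xs(2) by (auto simp: length_concat o_def)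
  also have "\<dots> = (\<Sum>i\<in>S. length (Z i))"
    using permutations_of_setD[OF xs(1)] by (simp add: sum_list_distinct_conv_sum_set)
  finally show ?thesis .
qed

lemma arrc_cong:
  assumes "finite S" "bij_betw f S S'" "\<And>i. i \<in> S \<Longrightarrow> Z' (f i) = Z i"
  shows "arrc Z S w = arrc Z' S' w"
  using assms
proof (induction "card S" arbitrary: S S' w)
  case 0
  then have "S = {}" "S' = {}" by (auto simp: bij_betw_def)
  then show ?case by (simp add: arrc_empty)
next
  case (Suc n)
  then have ne: "S \<noteq> {}" by auto
  have fin': "finite S'" using Suc.prems bij_betw_finite by blast
  have ne': "S' \<noteq> {}" using ne Suc.prems(2) by (auto simp: bij_betw_def)
  have "arrc Z' S' w = (\<Sum>j\<in>S'. if take (length (Z' j)) w = Z' j then arrc Z' (S' - {j}) (drop (length (Z' j)) w) else 0)"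
    by (rule arrc_rec[OF fin' ne'])
  also have "\<dots> = (\<Sum>i\<in>S. if take (length (Z' (f i))) w = Z' (f i) then arrc Z' (S' - {f i}) (drop (length (Z' (f i))) w) else 0)"
    by (rule sum.reindex_bij_betw[symmetric, OF Suc.prems(2)])
  also have "\<dots> = (\<Sum>i\<in>S. if take (length (Z i)) w = Z i then arrc Z (S - {i}) (drop (length (Z i)) w) else 0)"
  proof (rule sum.cong[OF refl])
    fix i assume i: "i \<in> S"
    have b: "bij_betw f (S - {i}) (S' - {f i})"
      using Suc.prems(2) i by (intro bij_betw_DiffI) (auto simp: bij_betw_def)
    have "arrc Z (S - {i}) v = arrc Z' (S' - {f i}) v" for v
      using Suc.hyps(1)[of "S - {i}" "S' - {f i}" v] Suc.hyps(2) Suc.prems i b by auto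
    then show "(if take (length (Z' (f i))) w = Z' (f i) then arrc Z' (S' - {f i}) (drop (length (Z' (f i))) w) else 0) =
          (if take (length (Z i)) w = Z i then arrc Z (S - {i}) (drop (length (Z i)) w) else 0)"
      using Suc.prems(3)[OF i] by simp
  qed
  also have "\<dots> = arrc Z S w" by (rule arrc_rec[OF Suc.prems(1) ne, symmetric])
  finally show ?case ..
qed



definition valid :: "(nat \<Rightarrow> nat list) \<Rightarrow> nat set \<Rightarrow> nat set \<Rightarrow> nat \<Rightarrow> bool" where
  "valid Z Sb Ss k \<longleftrightarrow> finite Ss \<and> Ss \<inter> Sb = {} \<and> card Ss = k \<and> (\<forall>i\<in>Ss. Z i = [1])"

lemma arrc_indep:
  assumes "finite Sb" "valid Z Sb Ss k" "valid Z Sb Ss' k"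
  shows "arrc Z (Sb \<union> Ss) w = arrc Z (Sb \<union> Ss') w"
proof -
  from assms obtain f where f: "bij_betw f Ss Ss'"
    unfolding valid_def by (metis finite_same_card_bij)
  define F where "F i = (if i \<in> Ss then f i else i)" for i
  have b1: "bij_betw F Ss Ss'"
    using f bij_betw_cong[of Ss F f Ss'] by (simp add: F_def)
  have b2: "bij_betw F Sb Sb"
  proof -
    have "\<And>a. a \<in> Sb \<Longrightarrow> F a = id a" using assms(2) unfolding valid_def F_def by auto
    then show ?thesis using bij_betw_cong[of Sb F id Sb] by simp
  qed
  have bF: "bij_betw F (Sb \<union> Ss) (Sb \<union> Ss')"
    by (rule bij_betw_combine[OF b2 b1]) (use assms(3) in \<open>auto simp: valid_def\<close>)
  have "Z (F i) = Z i" if "i \<in> Sb \<union> Ss" for i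
    using that assms f unfolding valid_def F_def bij_betw_def by auto
  then show ?thesis using arrc_cong[OF _ bF] assms(1,2) unfolding valid_def by auto
qed

lemma sum_polys:
  assumes "finite A" "\<forall>b\<in>A. \<exists>p::'a::field_char_0 poly. \<forall>s Ss. V s Ss \<longrightarrow> F b s Ss = c s * poly p (of_nat s)"
  shows "\<exists>p::'a poly. \<forall>s Ss. V s Ss \<longrightarrow> (\<Sum>b\<in>A. F b s Ss) = c s * poly p (of_nat s)"
proof -
  from assms(2) have "\<forall>b. \<exists>p::'a poly. b \<in> A \<longrightarrow> (\<forall>s Ss. V s Ss \<longrightarrow> F b s Ss = c s * poly p (of_nat s))" by blast
  then obtain pb where pb: "\<And>b s Ss. b \<in> A \<Longrightarrow> V s Ss \<Longrightarrow> F b s Ss = c s * poly (pb b) (of_nat s)" by metis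
  show ?thesis
    by (rule exI[of _ "\<Sum>b\<in>A. pb b"]) (simp add: poly_sum sum_distrib_left pb)
qed

lemma arrc_split:
  assumes "finite Sb" "finite Ss" "Sb \<inter> Ss = {}" "Sb \<union> Ss \<noteq> {}"
  shows "arrc Z (Sb \<union> Ss) w =
    (\<Sum>i\<in>Ss. if take (length (Z i)) w = Z i then arrc Z (Sb \<union> (Ss - {i})) (drop (length (Z i)) w) else 0) +
    (\<Sum>i\<in>Sb. if take (length (Z i)) w = Z i then arrc Z ((Sb - {i}) \<union> Ss) (drop (length (Z i)) w) else 0)"
proof -
  have e1: "\<And>i. i \<in> Sb \<Longrightarrow> (Sb \<union> Ss) - {i} = (Sb - {i}) \<union> Ss" using assms(3) by blast
  have e2: "\<And>i. i \<in> Ss \<Longrightarrow> (Sb \<union> Ss) - {i} = Sb \<union> (Ss - {i})" using assms(3) by blast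
  have "arrc Z (Sb \<union> Ss) w = (\<Sum>i\<in>Sb \<union> Ss. if take (length (Z i)) w = Z i then arrc Z ((Sb \<union> Ss) - {i}) (drop (length (Z i)) w) else 0)"
    using assms by (intro arrc_rec) auto
  also have "\<dots> = (\<Sum>i\<in>Sb. if take (length (Z i)) w = Z i then arrc Z ((Sb \<union> Ss) - {i}) (drop (length (Z i)) w) else 0) +
     (\<Sum>i\<in>Ss. if take (length (Z i)) w = Z i then arrc Z ((Sb \<union> Ss) - {i}) (drop (length (Z i)) w) else 0)"
    using assms by (intro sum.union_disjoint) auto
  also have "(\<Sum>i\<in>Sb. if take (length (Z i)) w = Z i then arrc Z ((Sb \<union> Ss) - {i}) (drop (length (Z i)) w) else 0) =
     (\<Sum>i\<in>Sb. if take (length (Z i)) w = Z i then arrc Z ((Sb - {i}) \<union> Ss) (drop (length (Z i)) w) else 0)"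
    by (intro sum.cong refl) (simp add: e1 e2)
  also have "(\<Sum>i\<in>Ss. if take (length (Z i)) w = Z i then arrc Z ((Sb \<union> Ss) - {i}) (drop (length (Z i)) w) else 0) =
     (\<Sum>i\<in>Ss. if take (length (Z i)) w = Z i then arrc Z (Sb \<union> (Ss - {i})) (drop (length (Z i)) w) else 0)"
    by (intro sum.cong refl) (simp add: e1 e2)
  finally show ?thesis by simp
qed



lemma base:
  fixes Z :: "nat \<Rightarrow> nat list" and h :: "nat list" and d :: nat
  shows "finite Sb \<Longrightarrow> (\<forall>i\<in>Sb. Z i \<noteq> [1] \<and> Z i \<noteq> []) \<Longrightarrow> (\<Sum>i\<in>Sb. length (Z i)) \<le> L \<Longrightarrow>
   \<exists>p::'a::field_char_0 poly. \<forall>s Ss. valid Z Sb Ss (d+s) \<longrightarrow>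
      (of_nat (arrc Z (Sb \<union> Ss) (replicate (L+s) 1 @ h)) :: 'a) = fact (d+s) * poly p (of_nat s)"
proof (induction "card Sb" arbitrary: Sb L rule: less_induct)
  case less
  note IH = less.hyps
  define V where "V s Ss = valid Z Sb Ss (d+s)" for s Ss
  have len_le: "length (Z b) \<le> L" if b: "b \<in> Sb" for b
    using member_le_sum[of b Sb "\<lambda>i. length (Z i)"] b less.prems by linarith
  have part2: "\<forall>b\<in>Sb. \<exists>p::'a poly. \<forall>s Ss. V s Ss \<longrightarrow> (of_nat (if take (length (Z b)) (replicate (L+s) 1 @ h) = Z b then arrc Z ((Sb - {b}) \<union> Ss) (drop (length (Z b)) (replicate (L+s) 1 @ h)) else 0) :: 'a) = fact (d+s) * poly p (of_nat s)"
  proof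
    fix b assume b: "b \<in> Sb"
    have tk: "take (length (Z b)) (replicate (L+s) 1 @ h) = replicate (length (Z b)) 1" for s
      using len_le[OF b] by simp
    have dr: "drop (length (Z b)) (replicate (L+s) 1 @ h) = replicate ((L - length (Z b)) + s) 1 @ h" for s
      using len_le[OF b] by simp
    show "\<exists>p::'a poly. \<forall>s Ss. V s Ss \<longrightarrow> (of_nat (if take (length (Z b)) (replicate (L+s) 1 @ h) = Z b then arrc Z ((Sb - {b}) \<union> Ss) (drop (length (Z b)) (replicate (L+s) 1 @ h)) else 0) :: 'a) = fact (d+s) * poly p (of_nat s)"
    proof (cases "Z b = replicate (length (Z b)) 1")
      case True
      have c: "card (Sb - {b}) < card Sb" using b less.prems(1) by (meson card_Diff1_less)
      have "(\<Sum>i\<in>Sb. length (Z i)) = length (Z b) + (\<Sum>i\<in>Sb-{b}. length (Z i))"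
        using b less.prems(1) by (simp add: sum.remove)
      hence sm: "(\<Sum>i\<in>Sb-{b}. length (Z i)) \<le> L - length (Z b)" using less.prems(3) by linarith
      obtain p :: "'a poly" where p: "\<forall>s Ss. valid Z (Sb - {b}) Ss (d+s) \<longrightarrow> of_nat (arrc Z ((Sb - {b}) \<union> Ss) (replicate ((L - length (Z b))+s) 1 @ h)) = fact (d+s) * poly p (of_nat s)"
        using IH[OF c, of "L - length (Z b)"] less.prems sm by auto
      have vv: "valid Z Sb Ss k \<Longrightarrow> valid Z (Sb - {b}) Ss k" for Ss k by (auto simp: valid_def)
      show ?thesis
      proof (intro exI[of _ p] allI impI)
        fix s Ss assume "V s Ss"
        then have "valid Z (Sb - {b}) Ss (d+s)" using vv by (simp add: V_def)
        then show "(of_nat (if take (length (Z b)) (replicate (L+s) 1 @ h) = Z b then arrc Z ((Sb - {b}) \<union> Ss) (drop (length (Z b)) (replicate (L+s) 1 @ h)) else 0) :: 'a) = fact (d+s) * poly p (of_nat s)"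
          unfolding tk dr if_P[OF True[symmetric]] using p by simp
      qed
    next
      case False
      then show ?thesis unfolding tk by (intro exI[of _ 0]) auto
    qed
  qed
  obtain Q :: "'a poly" where Q: "\<forall>s Ss. V s Ss \<longrightarrow> (\<Sum>b\<in>Sb. (of_nat (if take (length (Z b)) (replicate (L+s) 1 @ h) = Z b then arrc Z ((Sb - {b}) \<union> Ss) (drop (length (Z b)) (replicate (L+s) 1 @ h)) else 0) :: 'a)) = fact (d+s) * poly Q (of_nat s)"
    using sum_polys[OF less.prems(1) part2] by blast
  define c0 :: 'a where "c0 = (if \<exists>Ss. valid Z Sb Ss d then of_nat (arrc Z (Sb \<union> (SOME Ss. valid Z Sb Ss d)) (replicate L 1 @ h)) / fact d else 0)"
  obtain P :: "'a poly" where P0: "poly P 0 = c0" and PS: "\<And>s. poly P (of_nat (Suc s)) = poly P (of_nat s) + poly Q (of_nat (Suc s))"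
    using antideriv_poly by blast
  have main: "\<forall>Ss. V s Ss \<longrightarrow> (of_nat (arrc Z (Sb \<union> Ss) (replicate (L+s) 1 @ h)) :: 'a) = fact (d+s) * poly P (of_nat s)" for s
  proof (induction s)
    case 0
    show ?case
    proof (intro allI impI)
      fix Ss assume V0: "V 0 Ss"
      hence ex: "\<exists>Ss. valid Z Sb Ss d" by (auto simp: V_def)
      have "arrc Z (Sb \<union> Ss) (replicate L 1 @ h) = arrc Z (Sb \<union> (SOME Ss. valid Z Sb Ss d)) (replicate L 1 @ h)"
      proof -
        have v1: "valid Z Sb Ss d" using V0 by (simp add: V_def)
        have v2: "valid Z Sb (SOME Ss. valid Z Sb Ss d) d" by (rule someI_ex[OF ex])
        show ?thesis by (rule arrc_indep[OF less.prems(1) v1 v2])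
      qed
      then show "(of_nat (arrc Z (Sb \<union> Ss) (replicate (L+0) 1 @ h)) :: 'a) = fact (d+0) * poly P (of_nat 0)"
      proof -
        have "poly P (of_nat 0) = c0" using P0 by simp
        also have "c0 = of_nat (arrc Z (Sb \<union> (SOME Ss. valid Z Sb Ss d)) (replicate L 1 @ h)) / fact d"
          using ex by (simp only: c0_def if_True)
        finally show ?thesis using \<open>arrc Z (Sb \<union> Ss) (replicate L 1 @ h) = _\<close> by simp
      qed
    qed
  next
    case (Suc s)
    show ?case
    proof (intro allI impI)
      fix Ss assume V: "V (Suc s) Ss"
      define w where "w = replicate (L + Suc s) 1 @ h"
      have w: "w = 1 # (replicate (L+s) 1 @ h)" by (simp add: w_def)
      have fin: "finite Ss" "Ss \<inter> Sb = {}" "card Ss = d + Suc s" "\<forall>i\<in>Ss. Z i = [1]"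
        using V by (auto simp: V_def valid_def)
      have ne: "Sb \<union> Ss \<noteq> {}" using fin by auto
      have spl: "arrc Z (Sb \<union> Ss) w =
        (\<Sum>i\<in>Ss. if take (length (Z i)) w = Z i then arrc Z (Sb \<union> (Ss - {i})) (drop (length (Z i)) w) else 0) +
        (\<Sum>i\<in>Sb. if take (length (Z i)) w = Z i then arrc Z ((Sb - {i}) \<union> Ss) (drop (length (Z i)) w) else 0)"
        by (rule arrc_split) (use less.prems fin ne in auto)
      have s1: "(\<Sum>i\<in>Ss. (of_nat (if take (length (Z i)) w = Z i then arrc Z (Sb \<union> (Ss - {i})) (drop (length (Z i)) w) else 0) :: 'a))
           = (\<Sum>i\<in>Ss. fact (d+s) * poly P (of_nat s))"
      proof (rule sum.cong[OF refl])
        fix i assume i: "i \<in> Ss"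
        have "V s (Ss - {i})" using V i fin by (auto simp: V_def valid_def)
        then show "(of_nat (if take (length (Z i)) w = Z i then arrc Z (Sb \<union> (Ss - {i})) (drop (length (Z i)) w) else 0) :: 'a) = fact (d+s) * poly P (of_nat s)"
        proof -
          have "take (length (Z i)) w = Z i" "drop (length (Z i)) w = replicate (L+s) 1 @ h"
            using fin(4) i by (simp_all add: w)
          then show ?thesis using Suc.IH \<open>V s (Ss - {i})\<close> by simp
        qed
      qed
      have s1': "(\<Sum>i\<in>Ss. fact (d+s) * poly P (of_nat s)) = (fact (d + Suc s) * poly P (of_nat s) :: 'a)"
        using fin(3) by (simp add: algebra_simps)
      have s2: "(\<Sum>i\<in>Sb. (of_nat (if take (length (Z i)) w = Z i then arrc Z ((Sb - {i}) \<union> Ss) (drop (length (Z i)) w) else 0) :: 'a))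
          = fact (d + Suc s) * poly Q (of_nat (Suc s))"
        using Q[rule_format, OF V] unfolding w_def .
      show "(of_nat (arrc Z (Sb \<union> Ss) (replicate (L + Suc s) 1 @ h)) :: 'a) = fact (d + Suc s) * poly P (of_nat (Suc s))"
      proof -
        have "(of_nat (arrc Z (Sb \<union> Ss) w) :: 'a) = fact (d + Suc s) * poly P (of_nat s) + fact (d + Suc s) * poly Q (of_nat (Suc s))"
          unfolding spl of_nat_add of_nat_sum s1 s1' s2 by (rule refl)
        then show ?thesis unfolding w_def PS by (simp add: algebra_simps)
      qed
    qed
  qed
  then show ?case unfolding V_def by blast
qed



lemma mainlem:
  fixes Z :: "nat \<Rightarrow> nat list"
  shows "finite Sb \<Longrightarrow> (\<forall>i\<in>Sb. Z i \<noteq> [1] \<and> Z i \<noteq> []) \<Longrightarrow> (\<Sum>i\<in>Sb. length (Z i)) \<le> L \<Longrightarrow>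
   \<exists>p::'a::field_char_0 poly. \<forall>s Ss. valid Z Sb Ss (d+s) \<longrightarrow>
      (of_nat (arrc Z (Sb \<union> Ss) (g @ replicate (L+s) 1 @ h)) :: 'a) = fact (d+s) * poly p (of_nat s)"
proof (induction "length g" arbitrary: g Sb L d rule: less_induct)
  case less
  note IH = less.hyps
  show ?case
  proof (cases g)
    case Nil
    then show ?thesis using base[OF less.prems, of d h] by simp
  next
    case (Cons x g')
    define B where "B = (\<Sum>i\<in>Sb. length (Z i))"
    have BL: "B \<le> L" using less.prems(3) by (simp add: B_def)
    have sumU: "(\<Sum>i\<in>Sb \<union> Ss. length (Z i)) = B + k" if V: "valid Z Sb Ss k" for Ss k
    proof -
      have "(\<Sum>i\<in>Sb \<union> Ss. length (Z i)) = B + (\<Sum>i\<in>Ss. length (Z i))"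
        using V less.prems(1) unfolding valid_def B_def by (subst sum.union_disjoint) auto
      also have "(\<Sum>i\<in>Ss. length (Z i)) = (\<Sum>i\<in>Ss. 1)"
        using V unfolding valid_def by (intro sum.cong) auto
      finally show ?thesis using V by (simp add: valid_def)
    qed
    show ?thesis
    proof (cases "length g + L + length h = B + d")
      case False
      show ?thesis
      proof (intro exI[of _ 0] allI impI)
        fix s Ss assume V: "valid Z Sb Ss (d+s)"
        have "arrc Z (Sb \<union> Ss) (g @ replicate (L+s) 1 @ h) = 0"
        proof (rule ccontr)
          assume "arrc Z (Sb \<union> Ss) (g @ replicate (L+s) 1 @ h) \<noteq> 0"
          from arrc_len[OF this] sumU[OF V] have "length (g @ replicate (L+s) 1 @ h) = B + (d + s)" by simp
          then show False using False by simp
        qed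
        then show "(of_nat (arrc Z (Sb \<union> Ss) (g @ replicate (L+s) 1 @ h)) :: 'a) = fact (d+s) * poly 0 (of_nat s)" by simp
      qed
    next
      case True
      have "d \<ge> 1" using True Cons BL by auto
      then obtain d' where d: "d = Suc d'" by (cases d) auto
      define w where "w s = g @ replicate (L+s) 1 @ h" for s
      define V where "V s Ss = valid Z Sb Ss (d+s)" for s Ss
      have part1: "\<exists>p::'a poly. \<forall>s Ss. V s Ss \<longrightarrow> (\<Sum>i\<in>Ss. (of_nat (if take (length (Z i)) (w s) = Z i then arrc Z (Sb \<union> (Ss - {i})) (drop (length (Z i)) (w s)) else 0) :: 'a)) = fact (d+s) * poly p (of_nat s)"
      proof (cases "x = 1")
        case True
        obtain p1 :: "'a poly" where p1: "\<forall>s Ss. valid Z Sb Ss (d'+s) \<longrightarrow> of_nat (arrc Z (Sb \<union> Ss) (g' @ replicate (L+s) 1 @ h)) = fact (d'+s) * poly p1 (of_nat s)"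
          using IH[of g' Sb L d'] less.prems Cons by auto
        show ?thesis
        proof (intro exI[of _ p1] allI impI)
          fix s Ss assume V: "V s Ss"
          have fin: "finite Ss" "Ss \<inter> Sb = {}" "card Ss = d + s" "\<forall>i\<in>Ss. Z i = [1]"
            using V by (auto simp: V_def valid_def)
          have "(\<Sum>i\<in>Ss. (of_nat (if take (length (Z i)) (w s) = Z i then arrc Z (Sb \<union> (Ss - {i})) (drop (length (Z i)) (w s)) else 0) :: 'a))
              = (\<Sum>i\<in>Ss. fact (d'+s) * poly p1 (of_nat s))"
          proof (rule sum.cong[OF refl])
            fix i assume i: "i \<in> Ss"
            have e: "take (length (Z i)) (w s) = Z i" "drop (length (Z i)) (w s) = g' @ replicate (L+s) 1 @ h"
              using fin i True Cons by (simp_all add: w_def)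
            have "valid Z Sb (Ss - {i}) (d'+s)" using V i fin d by (auto simp: V_def valid_def)
            then show "(of_nat (if take (length (Z i)) (w s) = Z i then arrc Z (Sb \<union> (Ss - {i})) (drop (length (Z i)) (w s)) else 0) :: 'a)
               = fact (d'+s) * poly p1 (of_nat s)"
              unfolding e using p1 by simp
          qed
          also have "\<dots> = fact (d+s) * poly p1 (of_nat s)" using fin d by (simp add: algebra_simps)
          finally show "(\<Sum>i\<in>Ss. (of_nat (if take (length (Z i)) (w s) = Z i then arrc Z (Sb \<union> (Ss - {i})) (drop (length (Z i)) (w s)) else 0) :: 'a)) = fact (d+s) * poly p1 (of_nat s)" .
        qed
      next
        case False
        show ?thesis
        proof (intro exI[of _ 0] allI impI)
          fix s Ss assume V: "V s Ss"
          have "\<forall>i\<in>Ss. Z i = [1]" using V by (auto simp: V_def valid_def)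
          then show "(\<Sum>i\<in>Ss. (of_nat (if take (length (Z i)) (w s) = Z i then arrc Z (Sb \<union> (Ss - {i})) (drop (length (Z i)) (w s)) else 0) :: 'a)) = fact (d+s) * poly 0 (of_nat s)"
            using False Cons by (simp add: w_def)
        qed
      qed
      have part2: "\<forall>b\<in>Sb. \<exists>p::'a poly. \<forall>s Ss. V s Ss \<longrightarrow> (of_nat (if take (length (Z b)) (w s) = Z b then arrc Z ((Sb - {b}) \<union> Ss) (drop (length (Z b)) (w s)) else 0) :: 'a) = fact (d+s) * poly p (of_nat s)"
      proof
        fix b assume b: "b \<in> Sb"
        define l where "l = length (Z b)"
        have l1: "l \<ge> 1" using less.prems(2) b by (auto simp: l_def Suc_le_eq)
        have "B = l + (\<Sum>i\<in>Sb-{b}. length (Z i))"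
          using b less.prems(1) by (simp add: sum.remove B_def l_def)
        hence sm: "(\<Sum>i\<in>Sb-{b}. length (Z i)) = B - l" and lB: "l \<le> B" by linarith+
        have vv: "V s Ss \<Longrightarrow> valid Z (Sb - {b}) Ss (d+s)" for s Ss by (auto simp: V_def valid_def)
        have cS: "finite (Sb - {b})" "\<forall>i\<in>Sb-{b}. Z i \<noteq> [1] \<and> Z i \<noteq> []" using less.prems by auto
        show "\<exists>p::'a poly. \<forall>s Ss. V s Ss \<longrightarrow> (of_nat (if take (length (Z b)) (w s) = Z b then arrc Z ((Sb - {b}) \<union> Ss) (drop (length (Z b)) (w s)) else 0) :: 'a) = fact (d+s) * poly p (of_nat s)"
        proof (cases "l \<le> length g")
          case True
          have tk: "take l (w s) = take l g" "drop l (w s) = drop l g @ replicate (L+s) 1 @ h" for s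
            using True by (simp_all add: w_def)
          show ?thesis
          proof (cases "take l g = Z b")
            case True2: True
            have lt: "length (drop l g) < length g" using l1 Cons by simp
            obtain p :: "'a poly" where p: "\<forall>s Ss. valid Z (Sb-{b}) Ss (d+s) \<longrightarrow> of_nat (arrc Z ((Sb - {b}) \<union> Ss) (drop l g @ replicate (L+s) 1 @ h)) = fact (d+s) * poly p (of_nat s)"
              using IH[OF lt, of "Sb - {b}" L d] cS sm BL by fastforce
            show ?thesis
            proof (intro exI[of _ p] allI impI)
              fix s Ss assume "V s Ss"
              then show "(of_nat (if take (length (Z b)) (w s) = Z b then arrc Z ((Sb - {b}) \<union> Ss) (drop (length (Z b)) (w s)) else 0) :: 'a) = fact (d+s) * poly p (of_nat s)"
                unfolding l_def[symmetric] tk if_P[OF True2] using p vv by simp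
            qed
          next
            case False2: False
            show ?thesis
              unfolding l_def[symmetric] tk using False2 by (intro exI[of _ 0]) simp
          qed
        next
          case False
          define j where "j = l - length g"
          have jL: "j \<le> L" using lB BL by (simp add: j_def)
          have tk: "take l (w s) = g @ replicate j 1" "drop l (w s) = [] @ replicate ((L - j) + s) 1 @ h" for s
            using False jL by (simp_all add: w_def j_def)
          show ?thesis
          proof (cases "g @ replicate j 1 = Z b")
            case True2: True
            have lt: "length [] < length g" using Cons by simp
            have "B - l \<le> L - j" using BL False by (simp add: j_def)
            then obtain p :: "'a poly" where p: "\<forall>s Ss. valid Z (Sb-{b}) Ss (d+s) \<longrightarrow> of_nat (arrc Z ((Sb - {b}) \<union> Ss) ([] @ replicate ((L - j)+s) 1 @ h)) = fact (d+s) * poly p (of_nat s)"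
              using IH[OF lt, of "Sb - {b}" "L - j" d] cS sm by auto
            show ?thesis
            proof (intro exI[of _ p] allI impI)
              fix s Ss assume "V s Ss"
              then show "(of_nat (if take (length (Z b)) (w s) = Z b then arrc Z ((Sb - {b}) \<union> Ss) (drop (length (Z b)) (w s)) else 0) :: 'a) = fact (d+s) * poly p (of_nat s)"
                unfolding l_def[symmetric] tk if_P[OF True2] using p vv by simp
            qed
          next
            case False2: False
            show ?thesis
              unfolding l_def[symmetric] tk using False2 by (intro exI[of _ 0]) simp
          qed
        qed
      qed
      obtain Q :: "'a poly" where Q: "\<forall>s Ss. V s Ss \<longrightarrow> (\<Sum>b\<in>Sb. (of_nat (if take (length (Z b)) (w s) = Z b then arrc Z ((Sb - {b}) \<union> Ss) (drop (length (Z b)) (w s)) else 0) :: 'a)) = fact (d+s) * poly Q (of_nat s)"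
        using sum_polys[OF less.prems(1) part2] by blast
      obtain p1 :: "'a poly" where p1: "\<forall>s Ss. V s Ss \<longrightarrow> (\<Sum>i\<in>Ss. (of_nat (if take (length (Z i)) (w s) = Z i then arrc Z (Sb \<union> (Ss - {i})) (drop (length (Z i)) (w s)) else 0) :: 'a)) = fact (d+s) * poly p1 (of_nat s)"
        using part1 by blast
      show ?thesis
      proof (intro exI[of _ "p1 + Q"] allI impI)
        fix s Ss assume V: "valid Z Sb Ss (d+s)"
        have fin: "finite Ss" "Ss \<inter> Sb = {}" "card Ss = d + s"
          using V by (auto simp: valid_def)
        have ne: "Sb \<union> Ss \<noteq> {}" using fin d by auto
        have spl: "arrc Z (Sb \<union> Ss) (w s) =
          (\<Sum>i\<in>Ss. if take (length (Z i)) (w s) = Z i then arrc Z (Sb \<union> (Ss - {i})) (drop (length (Z i)) (w s)) else 0) +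
          (\<Sum>i\<in>Sb. if take (length (Z i)) (w s) = Z i then arrc Z ((Sb - {i}) \<union> Ss) (drop (length (Z i)) (w s)) else 0)"
          by (rule arrc_split) (use less.prems fin ne in auto)
        have VV: "V s Ss" using V by (simp add: V_def)
        have "(of_nat (arrc Z (Sb \<union> Ss) (w s)) :: 'a) = fact (d+s) * poly p1 (of_nat s) + fact (d+s) * poly Q (of_nat s)"
          unfolding spl of_nat_add of_nat_sum using p1 Q VV by simp
        then show "(of_nat (arrc Z (Sb \<union> Ss) (g @ replicate (L+s) 1 @ h)) :: 'a) = fact (d+s) * poly (p1 + Q) (of_nat s)"
          by (simp add: w_def algebra_simps)
      qed
    qed
  qed
qed



lemma Pn_coef_arrc:
  assumes "\<And>i. i < length zs \<Longrightarrow> Z i = zs ! i"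
  shows "(Pn_coef zs u :: 'a::field_char_0) = of_nat (arrc Z {..<length zs} u)"
proof -
  define n where "n = length zs"
  define f where "f \<sigma> = map \<sigma> [0..<n]" for \<sigma> :: "nat \<Rightarrow> nat"
  have "bij_betw f {\<sigma>. \<sigma> permutes {..<n} \<and> concat (map (\<lambda>i. zs ! \<sigma> i) [0..<n]) = u}
                   {xs \<in> permutations_of_set {..<n}. concat (map Z xs) = u}"
  proof (rule bij_betw_imageI)
    show "inj_on f {\<sigma>. \<sigma> permutes {..<n} \<and> concat (map (\<lambda>i. zs ! \<sigma> i) [0..<n]) = u}"
    proof (rule inj_onI)
      fix \<sigma> \<tau> assume s: "\<sigma> \<in> {\<sigma>. \<sigma> permutes {..<n} \<and> concat (map (\<lambda>i. zs ! \<sigma> i) [0..<n]) = u}"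
        and t: "\<tau> \<in> {\<sigma>. \<sigma> permutes {..<n} \<and> concat (map (\<lambda>i. zs ! \<sigma> i) [0..<n]) = u}" and e: "f \<sigma> = f \<tau>"
      show "\<sigma> = \<tau>"
      proof
        fix x show "\<sigma> x = \<tau> x"
        proof (cases "x < n")
          case True
          then show ?thesis using e unfolding f_def by (metis (no_types, lifting) add_0 diff_zero length_map length_upt nth_map nth_upt)
        next
          case False
          then have "\<sigma> x = x" "\<tau> x = x" using s t by (auto intro: permutes_not_in)
          then show ?thesis by simp
        qed
      qed
    qed
  next
    show "f ` {\<sigma>. \<sigma> permutes {..<n} \<and> concat (map (\<lambda>i. zs ! \<sigma> i) [0..<n]) = u} = {xs \<in> permutations_of_set {..<n}. concat (map Z xs) = u}"
    proof (intro equalityI subsetI)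
      fix xs assume "xs \<in> f ` {\<sigma>. \<sigma> permutes {..<n} \<and> concat (map (\<lambda>i. zs ! \<sigma> i) [0..<n]) = u}"
      then obtain \<sigma> where s: "\<sigma> permutes {..<n}" "concat (map (\<lambda>i. zs ! \<sigma> i) [0..<n]) = u" and xs: "xs = f \<sigma>" by auto
      have "set xs = {..<n}" using s permutes_image[OF s(1)] by (simp add: xs f_def atLeast0LessThan)
      moreover have "distinct xs" using permutes_inj_on[OF s(1)] by (simp add: xs f_def distinct_map atLeast0LessThan)
      moreover have "map Z xs = map (\<lambda>i. zs ! \<sigma> i) [0..<n]"
        using assms permutes_in_image[OF s(1)] by (auto simp: xs f_def n_def)
      ultimately show "xs \<in> {xs \<in> permutations_of_set {..<n}. concat (map Z xs) = u}"
        using s(2) by (auto simp: permutations_of_set_def)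
    next
      fix xs assume xs: "xs \<in> {xs \<in> permutations_of_set {..<n}. concat (map Z xs) = u}"
      then have sx: "set xs = {..<n}" "distinct xs" "concat (map Z xs) = u" by (auto simp: permutations_of_set_def)
      have lx: "length xs = n" using sx distinct_card[of xs] by simp
      define \<sigma> where "\<sigma> i = (if i < n then xs ! i else i)" for i
      have b: "bij_betw \<sigma> {..<n} {..<n}"
      proof (rule bij_betw_imageI)
        show "inj_on \<sigma> {..<n}" using sx(2) lx by (auto simp: inj_on_def \<sigma>_def nth_eq_iff_index_eq)
        show "\<sigma> ` {..<n} = {..<n}" using sx(1) lx by (auto simp: \<sigma>_def set_conv_nth image_def)
      qed
      have p: "\<sigma> permutes {..<n}" by (rule bij_imp_permutes[OF b]) (simp add: \<sigma>_def)
      have fx: "f \<sigma> = xs" using lx by (intro nth_equalityI) (auto simp: f_def \<sigma>_def)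
      have "map (\<lambda>i. zs ! \<sigma> i) [0..<n] = map Z xs"
      proof -
        have "map (\<lambda>i. zs ! \<sigma> i) [0..<n] = map (\<lambda>j. zs ! j) (f \<sigma>)" by (simp add: f_def)
        also have "\<dots> = map Z xs" using fx sx(1) assms by (auto simp: n_def)
        finally show ?thesis .
      qed
      then show "xs \<in> f ` {\<sigma>. \<sigma> permutes {..<n} \<and> concat (map (\<lambda>i. zs ! \<sigma> i) [0..<n]) = u}"
        using p fx sx(3) by (auto intro!: image_eqI[of _ _ \<sigma>])
    qed
  qed
  then have "card {\<sigma>. \<sigma> permutes {..<n} \<and> concat (map (\<lambda>i. zs ! \<sigma> i) [0..<n]) = u} = arrc Z {..<n} u"
    unfolding arrc_def by (rule bij_betw_same_card)
  then show ?thesis by (simp add: Pn_coef_def n_def)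
qed

definition nonones :: "nat list \<Rightarrow> nat" where "nonones w = length (filter (\<lambda>x. x \<noteq> 1) w)"
definition ones :: "nat list \<Rightarrow> nat" where "ones w = length (filter (\<lambda>x. x = 1) w)"

lemma run_shift: "run_at v i r \<Longrightarrow> run_at (p @ v) (length p + i) r"
  by (auto simp: run_at_def nth_append)

lemma run_rep: "run_at (replicate R 1 @ u) 0 R"
  by (auto simp: run_at_def nth_append)

lemma no_run_bound:
  "R \<ge> 1 \<Longrightarrow> k < R \<Longrightarrow> (\<forall>i. \<not> run_at (replicate k 1 @ u) i R) \<Longrightarrow> k + ones u \<le> (R-1) * (nonones u + 1)"
proof (induction u arbitrary: k)
  case Nil
  then show ?case by (simp add: ones_def nonones_def)
next
  case (Cons x u)
  show ?case
  proof (cases "x = 1")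
    case True
    have e: "replicate k 1 @ x # u = replicate (Suc k) 1 @ u" using True by (simp add: replicate_app_Cons_same)
    show ?thesis
    proof (cases "Suc k < R")
      case True
      have "\<forall>i. \<not> run_at (replicate (Suc k) 1 @ u) i R" using Cons.prems(3) unfolding e .
      then have "Suc k + ones u \<le> (R-1) * (nonones u + 1)" using Cons.IH[OF Cons.prems(1) True] by blast
      then show ?thesis using \<open>x = 1\<close> by (simp add: ones_def nonones_def)
    next
      case False
      then have "Suc k = R" using Cons.prems by simp
      then have "run_at (replicate k 1 @ x # u) 0 R" unfolding e using run_rep[of R u] by simp
      then show ?thesis using Cons.prems(3) by blast
    qed
  next
    case False
    have "\<forall>i. \<not> run_at (replicate 0 1 @ u) i R"
    proof (intro allI notI)
      fix i assume "run_at (replicate 0 1 @ u) i R"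
      then have "run_at ((replicate k 1 @ [x]) @ u) (length (replicate k 1 @ [x]) + i) R" by (intro run_shift) simp
      then show False using Cons.prems(3) by simp
    qed
    then have "ones u \<le> (R-1) * (nonones u + 1)" using Cons.IH[of 0] Cons.prems by simp
    then show ?thesis using False Cons.prems by (simp add: ones_def nonones_def algebra_simps)
  qed
qed

lemma central_props:
  shows "run_at u (central_start u) (central_len u)"
    and "run_at u i R \<Longrightarrow> R \<le> central_len u"
proof -
  have fin: "finite {r. \<exists>i. run_at u i r}"
    by (rule finite_subset[of _ "{..length u}"]) (auto simp: run_at_def)
  have "0 \<in> {r. \<exists>i. run_at u i r}" by (auto simp: run_at_def intro: exI[of _ 0])
  then have "central_len u \<in> {r. \<exists>i. run_at u i r}" unfolding central_len_def using fin by (intro Max_in) auto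
  then show "run_at u (central_start u) (central_len u)"
    unfolding central_start_def by (auto intro: LeastI_ex)
  show "run_at u i R \<Longrightarrow> R \<le> central_len u"
    unfolding central_len_def using fin by (intro Max_ge) auto
qed

lemma ushift_decomp:
  fixes u :: "nat list"
  defines "g \<equiv> take (central_start u) u" and "h \<equiv> drop (central_start u + central_len u) u"
  shows "u = g @ replicate (central_len u) 1 @ h"
    and "ushift s u = g @ replicate (central_len u + s) 1 @ h"
proof -
  let ?st = "central_start u" and ?L = "central_len u"
  have r: "run_at u ?st ?L" by (rule central_props(1))
  have "take ?L (drop ?st u) = replicate ?L 1"
    using r by (intro nth_equalityI) (auto simp: run_at_def)
  then have d: "drop ?st u = replicate ?L 1 @ h"
    unfolding h_def by (metis append_take_drop_id drop_drop add.commute)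
  show "u = g @ replicate ?L 1 @ h" unfolding g_def using d by (metis append_take_drop_id)
  show "ushift s u = g @ replicate (?L + s) 1 @ h"
    unfolding ushift_def g_def d by (simp add: replicate_add[symmetric] add.commute)
qed

lemma fact_poly:
  "\<exists>q::'a::field_char_0 poly. \<forall>s. (fact (d+s) :: 'a) = fact s * poly q (of_nat s)"
proof (induction d)
  case 0
  show ?case by (rule exI[of _ 1]) simp
next
  case (Suc d)
  then obtain q :: "'a poly" where q: "\<And>s. (fact (d+s) :: 'a) = fact s * poly q (of_nat s)" by blast
  show ?case
  proof (rule exI[of _ "q * [:of_nat (Suc d), 1:]"], intro allI)
    fix s
    have "(fact (Suc d + s) :: 'a) = of_nat (Suc (d + s)) * fact (d+s)" by simp
    also have "\<dots> = fact s * poly (q * [:of_nat (Suc d), 1:]) (of_nat s)"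
      unfolding q by (simp add: algebra_simps)
    finally show "(fact (Suc d + s) :: 'a) = fact s * poly (q * [:of_nat (Suc d), 1:]) (of_nat s)" .
  qed
qed



lemma length_le_sum_list: "0 \<notin> set (xs :: nat list) \<Longrightarrow> length xs \<le> sum_list xs"
  by (induction xs) (auto simp: Suc_le_eq)

lemma sum_list_shift:
  assumes "sum_list \<mu> = 4 * K" "n \<ge> 3 * K"
  shows "sum_list (shift_first (n - 3 * K) \<mu>) = n + K"
  using assms by (cases \<mu>) (auto simp: shift_first_def)

lemma cell_bound:
  assumes "is_partition \<mu>" "sum_list \<mu> = 4 * K"
    and "(i, c) \<in> diagram (shift_first t \<mu>)" "i \<noteq> 1"
  shows "i \<le> 4 * K \<and> c \<le> 4 * K"
proof (cases \<mu>)
  case Nil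
  then show ?thesis using assms by (auto simp: shift_first_def diagram_def split: if_splits)
next
  case (Cons a r)
  have d: "2 \<le> i" "i \<le> length \<mu>" "c \<le> \<mu> ! (i - 1)"
    using assms(3,4) Cons by (auto simp: shift_first_def diagram_def nth_Cons')
  have "length \<mu> \<le> sum_list \<mu>" using assms(1) by (intro length_le_sum_list) (simp add: is_partition_def)
  moreover have "\<mu> ! (i - 1) \<le> sum_list \<mu>" using d by (intro elem_le_sum_list) simp
  ultimately show ?thesis using d assms(2) by linarith
qed

lemma nonones_concat: "nonones (concat L) = sum_list (map nonones L)"
  by (induction L) (auto simp: nonones_def)

lemma perm_sum: "xs \<in> permutations_of_set S \<Longrightarrow> sum_list (map F (map Z xs)) = (\<Sum>i\<in>S. F (Z i))"
  by (auto simp: permutations_of_set_def sum_list_distinct_conv_sum_set o_def)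

lemma nonones_tableau:
  assumes "is_partition \<mu>" "sum_list \<mu> = 4 * K" "n \<ge> 3 * K"
    and "standard_tableau (shift_first (n - 3 * K) \<mu>) T" "Os \<in> Omega n (n + K)"
  shows "nonones (concat (sub_blocks (shift_first (n - 3 * K) \<mu>) T Os)) \<le> 16 * K * K"
proof -
  define \<nu> where "\<nu> = shift_first (n - 3 * K) \<mu>"
  have bij: "bij_betw T (diagram \<nu>) {1..n+K}"
    using assms(4) sum_list_shift[OF assms(2,3)] by (simp add: standard_tableau_def \<nu>_def)
  have O: "distinct (concat Os)" "set (concat Os) = {1..n+K}" using assms(5) by (auto simp: Omega_def)
  define S where "S = {j \<in> {1..n+K}. row_of \<nu> T j \<noteq> 1}"
  have "nonones (concat (sub_blocks \<nu> T Os)) = length (filter (\<lambda>j. row_of \<nu> T j \<noteq> 1) (concat Os))"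
    by (simp add: sub_blocks_def nonones_def map_concat[symmetric] filter_map o_def)
  also have "\<dots> = card S"
    using O by (simp add: distinct_length_filter S_def Int_def conj_commute)
  also have "card S = card (the_inv_into (diagram \<nu>) T ` S)"
  proof -
    have "inj_on (the_inv_into (diagram \<nu>) T) {1..n+K}"
      using bij_betw_the_inv_into[OF bij] by (simp add: bij_betw_def)
    then show ?thesis by (intro card_image[symmetric]) (auto simp: S_def intro: inj_on_subset)
  qed
  also have "\<dots> \<le> card ({1..4*K} \<times> {1..4*K})"
  proof (rule card_mono)
    show "the_inv_into (diagram \<nu>) T ` S \<subseteq> {1..4*K} \<times> {1..4*K}"
    proof
      fix c assume "c \<in> the_inv_into (diagram \<nu>) T ` S"
      then obtain j where j: "j \<in> S" "c = the_inv_into (diagram \<nu>) T j" by auto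
      have cd: "c \<in> diagram \<nu>" using j bij_betw_the_inv_into[OF bij] by (auto simp: S_def bij_betw_def)
      have "fst c \<noteq> 1" using j by (simp add: S_def row_of_def)
      then show "c \<in> {1..4*K} \<times> {1..4*K}"
        using cell_bound[OF assms(1,2), of "fst c" "snd c" "n - 3 * K"] cd
        by (cases c) (auto simp: \<nu>_def diagram_def)
    qed
  qed simp
  also have "\<dots> = 16 * K * K" by simp
  finally show ?thesis by (simp add: \<nu>_def)
qed

lemma blocks_bound:
  assumes "Os \<in> Omega n (n + K)" "zs = map (map r) Os"
  shows "(\<Sum>i\<in>{i. i < n \<and> zs ! i \<noteq> [1]}. length (zs ! i)) \<le> 2 * K + nonones (concat zs)"
    and "length zs = n" "\<forall>i<n. zs ! i \<noteq> []" "(\<Sum>i<n. length (zs ! i)) = n + K"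
    and "(\<Sum>i<n. nonones (zs ! i)) = nonones (concat zs)"
proof -
  have O: "length Os = n" "\<forall>A\<in>set Os. A \<noteq> []" "distinct (concat Os)" "set (concat Os) = {1..n+K}"
    using assms(1) by (auto simp: Omega_def)
  show ln: "length zs = n" using O assms(2) by simp
  show ne: "\<forall>i<n. zs ! i \<noteq> []" using O assms(2) by (auto simp: nth_mem)
  have "length (concat Os) = n + K" using O(3,4) distinct_card[of "concat Os"] by simp
  then have "length (concat zs) = n + K" using assms(2) by (simp add: length_concat o_def)
  then show tot: "(\<Sum>i<n. length (zs ! i)) = n + K"
    using ln by (simp add: length_concat sum_list_sum_nth atLeast0LessThan)
  show nn: "(\<Sum>i<n. nonones (zs ! i)) = nonones (concat zs)"
    using ln by (simp add: nonones_concat sum_list_sum_nth atLeast0LessThan)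
  have "(\<Sum>i<n. length (zs ! i) - 1) + (\<Sum>i<n. 1) = (\<Sum>i<n. length (zs ! i))"
    unfolding sum.distrib[symmetric] using ne by (intro sum.cong) (auto simp: Suc_le_eq)
  then have K: "(\<Sum>i<n. length (zs ! i) - 1) = K" using tot by simp
  have "(\<Sum>i\<in>{i. i < n \<and> zs ! i \<noteq> [1]}. length (zs ! i)) \<le> (\<Sum>i\<in>{i. i < n \<and> zs ! i \<noteq> [1]}. 2 * (length (zs ! i) - 1) + nonones (zs ! i))"
  proof (rule sum_mono)
    fix i assume i: "i \<in> {i. i < n \<and> zs ! i \<noteq> [1]}"
    show "length (zs ! i) \<le> 2 * (length (zs ! i) - 1) + nonones (zs ! i)"
    proof (cases "length (zs ! i) \<ge> 2")
      case True then show ?thesis by simp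
    next
      case False
      have "zs ! i \<noteq> []" using ne i by auto
      then have "length (zs ! i) = 1" using False by (cases "zs ! i") (auto simp: Suc_le_eq)
      then obtain a where "zs ! i = [a]" by (auto simp: length_Suc_conv)
      then show ?thesis using i by (simp add: nonones_def)
    qed
  qed
  also have "\<dots> \<le> (\<Sum>i<n. 2 * (length (zs ! i) - 1) + nonones (zs ! i))"
    by (rule sum_mono2) auto
  also have "\<dots> = 2 * K + nonones (concat zs)"
    using K nn by (simp add: sum.distrib sum_distrib_left[symmetric])
  finally show "(\<Sum>i\<in>{i. i < n \<and> zs ! i \<noteq> [1]}. length (zs ! i)) \<le> 2 * K + nonones (concat zs)" .
qed



theorem lemma4p23:
  fixes K :: nat and \<mu> :: "nat list"
  assumes "is_partition \<mu>" and "sum_list \<mu> = 4 * K"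
  shows "\<exists>M \<ge> 3 * K. \<forall>n \<ge> M. \<forall>T Os.
           standard_tableau (shift_first (n - 3 * K) \<mu>) T \<and> Os \<in> Omega n (n + K) \<longrightarrow>
           (\<forall>u. (Pn_coef (sub_blocks (shift_first (n - 3 * K) \<mu>) T Os) u :: 'a::field_char_0) \<noteq> 0 \<longrightarrow>
              (\<exists>p :: 'a poly. \<forall>s :: nat.
                 Pn_coef (sub_blocks (shift_first (n - 3 * K) \<mu>) T Os @ replicate s [1]) (ushift s u)
                   = poly p (of_nat s) * fact s))"
proof -
  define Q0 where "Q0 = 16 * K * K"
  define R where "R = 2 * K + Q0 + 1"
  define M where "M = 3 * K + R * (Q0 + 1) + Q0 + 1"
  show ?thesis
  proof (rule exI[of _ M], intro conjI allI impI)
    show "3 * K \<le> M" by (simp add: M_def)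
  next
    fix n T Os u
    assume n: "M \<le> n"
      and TO: "standard_tableau (shift_first (n - 3 * K) \<mu>) T \<and> Os \<in> Omega n (n + K)"
      and u0: "(Pn_coef (sub_blocks (shift_first (n - 3 * K) \<mu>) T Os) u :: 'a) \<noteq> 0"
    define zs where "zs = sub_blocks (shift_first (n - 3 * K) \<mu>) T Os"
    have n3: "3 * K \<le> n" using n by (simp add: M_def)
    have zsm: "zs = map (map (row_of (shift_first (n - 3 * K) \<mu>) T)) Os" by (simp add: zs_def sub_blocks_def)
    note bb = blocks_bound[OF conjunct2[OF TO] zsm]
    have nnz: "nonones (concat zs) \<le> Q0"
      unfolding zs_def Q0_def using nonones_tableau[OF assms n3] TO by blast
    define Z where "Z i = (if i < n then zs ! i else [1])" for i
    have P0: "(Pn_coef zs u :: 'a) = of_nat (arrc Z {..<n} u)"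
      using Pn_coef_arrc[of zs Z u] bb(2) by (simp add: Z_def)
    then have "arrc Z {..<n} u \<noteq> 0" using u0 by (auto simp: zs_def)
    then obtain xs where xs: "xs \<in> permutations_of_set {..<n}" "concat (map Z xs) = u"
      unfolding arrc_def by (metis (mono_tags, lifting) card.empty empty_Collect_eq)
    have lu: "length u = n + K"
    proof -
      have "length u = sum_list (map length (map Z xs))" using xs(2) by (auto simp: length_concat o_def)
      also have "\<dots> = (\<Sum>i<n. length (zs ! i))" using perm_sum[OF xs(1), of length Z] by (simp add: Z_def)
      finally show ?thesis using bb(4) by simp
    qed
    have nu: "nonones u = nonones (concat zs)"
    proof -
      have "nonones u = sum_list (map nonones (map Z xs))" using xs(2) by (auto simp: nonones_concat o_def)
      also have "\<dots> = (\<Sum>i<n. nonones (zs ! i))" using perm_sum[OF xs(1), of nonones Z] by (simp add: Z_def)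
      finally show ?thesis using bb(5) by simp
    qed
    have ou: "ones u + nonones u = n + K"
      using sum_length_filter_compl[of "\<lambda>x. x = 1" u] lu by (simp add: ones_def nonones_def)
    have "\<exists>i. run_at u i R"
    proof (rule ccontr)
      assume "\<not> (\<exists>i. run_at u i R)"
      then have "0 + ones u \<le> (R - 1) * (nonones u + 1)"
        using no_run_bound[of R 0 u] by (simp add: R_def)
      moreover have "(R - 1) * (nonones u + 1) \<le> (R - 1) * (Q0 + 1)" using nnz nu by simp
      moreover have "(R - 1) * (Q0 + 1) \<le> R * (Q0 + 1)" by (intro mult_le_mono1) simp
      ultimately show False using ou n nnz nu unfolding M_def by linarith
    qed
    then have RL: "R \<le> central_len u" using central_props(2) by blast
    define Sb where "Sb = {i. i < n \<and> zs ! i \<noteq> [1]}"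
    define Ss0 where "Ss0 = {i. i < n \<and> zs ! i = [1]}"
    define d where "d = card Ss0"
    define L where "L = central_len u"
    define g where "g = take (central_start u) u"
    define h where "h = drop (central_start u + central_len u) u"
    have BL: "(\<Sum>i\<in>Sb. length (Z i)) \<le> L"
    proof -
      have "(\<Sum>i\<in>Sb. length (Z i)) = (\<Sum>i\<in>Sb. length (zs ! i))" by (intro sum.cong) (auto simp: Sb_def Z_def)
      also have "\<dots> \<le> 2 * K + nonones (concat zs)" using bb(1) by (simp add: Sb_def)
      finally show ?thesis using nnz RL by (simp add: L_def R_def)
    qed
    have finSb: "finite Sb" by (simp add: Sb_def)
    have goodSb: "\<forall>i\<in>Sb. Z i \<noteq> [1] \<and> Z i \<noteq> []" using bb(3) by (auto simp: Sb_def Z_def)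
    obtain p :: "'a poly" where p: "\<forall>s Ss. valid Z Sb Ss (d+s) \<longrightarrow>
      (of_nat (arrc Z (Sb \<union> Ss) (g @ replicate (L+s) 1 @ h)) :: 'a) = fact (d+s) * poly p (of_nat s)"
      using mainlem[OF finSb goodSb BL, of d g h] by blast
    obtain q :: "'a poly" where q: "\<And>s. (fact (d+s) :: 'a) = fact s * poly q (of_nat s)"
      using fact_poly by blast
    show "\<exists>p :: 'a poly. \<forall>s :: nat.
                 Pn_coef (sub_blocks (shift_first (n - 3 * K) \<mu>) T Os @ replicate s [1]) (ushift s u)
                   = poly p (of_nat s) * fact s"
    proof (intro exI[of _ "q * p"] allI)
      fix s
      define Ss where "Ss = Ss0 \<union> {n..<n+s}"
      have v: "valid Z Sb Ss (d+s)"
      proof -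
        have "card Ss = d + s" unfolding Ss_def d_def by (subst card_Un_disjoint) (auto simp: Ss0_def)
        then show ?thesis by (auto simp: valid_def Ss_def Ss0_def Sb_def Z_def)
      qed
      have U: "Sb \<union> Ss = {..<n+s}" by (auto simp: Sb_def Ss_def Ss0_def)
      have "(Pn_coef (zs @ replicate s [1]) (ushift s u) :: 'a) = of_nat (arrc Z {..<n+s} (ushift s u))"
      proof -
        have "\<And>i. i < length (zs @ replicate s [1]) \<Longrightarrow> Z i = (zs @ replicate s [1]) ! i"
          using bb(2) by (auto simp: Z_def nth_append)
        from Pn_coef_arrc[of "zs @ replicate s [1]" Z "ushift s u", OF this] show ?thesis using bb(2) by simp
      qed
      also have us: "ushift s u = g @ replicate (L+s) 1 @ h"
        unfolding g_def h_def L_def by (rule ushift_decomp(2))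
      also have "(of_nat (arrc Z {..<n+s} (g @ replicate (L+s) 1 @ h)) :: 'a) = fact (d+s) * poly p (of_nat s)"
        using p v U by metis
      also have "\<dots> = poly (q * p) (of_nat s) * fact s" by (simp add: q)
      finally show "Pn_coef (sub_blocks (shift_first (n - 3 * K) \<mu>) T Os @ replicate s [1]) (ushift s u)
                   = poly (q * p) (of_nat s) * (fact s :: 'a)" by (simp add: zs_def us)
    qed
  qed
qed

end
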